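(* Let $\{\mathcal T^+,\mathcal T^-\}$ be a closed orientation of a medium with $n$ states. Then for any state $S$, at most $\log_2 n$ tokens in $\mathcal T^+$ are effective for $S$.
   Context: A medium consists of a finite set of states and a set $\mathcal T$ of tokens, each token $t$ acting as a function on states, written $S\mapsto St$. Tokens concatenate into messages (words); $Sw$ denotes the state obtained by applying the tokens of $w$ successively to $S$. A token $t$ has a reverse $\tilde t$ if for any two distinct states $S\neq Q$, $St=Q$ iff $Q\tilde t=S$. A message is inconsistent if it contains some token together with its reverse, and consistent otherwise. A message $w$ is vacuous if for each token $t$ it contains equally many copies of $t$ and $\tilde t$. A token $t$ is effective for $S$ if $St\neq S$; a message is stepwise effective for $S$ if each successive token is effective for the state it is applied to. The axioms of a medium are: (1) each token has a unique reverse; (2) for any two distinct states $S,Q$ there is a consistent message $w$ with $Sw=Q$; (3) if $w$ is stepwise effective for $S$, then $Sw=S$ iff $w$ is vacuous; (4) if $Sw=Qz$, $w$ is stepwise effective for $S$, $z$ is stepwise effective for $Q$, and both $w,z$ are consistent, then $wz$ is consistent. An orientation is a partition $\{\mathcal T^+,\mathcal T^-\}$ of $\mathcal T$ such that for each token $t$ exactly one of $t,\tilde t$ lies in $\mathcal T^+$ (the positive tokens). An orientation is closed if whenever two positive tokens $t,t'$ are both effective for a state $S$, the messages $tt'$ and $t't$ are stepwise effective for $S$. *)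

theory Defs
  imports Complex_Main
begin

definition apply_msg :: "('t \<Rightarrow> 'a \<Rightarrow> 'a) \<Rightarrow> 'a \<Rightarrow> 't list \<Rightarrow> 'a" where
  "apply_msg act s w = fold act w s"

definition is_reverse :: "'a set \<Rightarrow> ('t \<Rightarrow> 'a \<Rightarrow> 'a) \<Rightarrow> 't \<Rightarrow> 't \<Rightarrow> bool" where
  "is_reverse S act t u \<longleftrightarrow>
     (\<forall>P\<in>S. \<forall>Q\<in>S. P \<noteq> Q \<longrightarrow> (act t P = Q \<longleftrightarrow> act u Q = P))"

definition rev_tok :: "'a set \<Rightarrow> 't set \<Rightarrow> ('t \<Rightarrow> 'a \<Rightarrow> 'a) \<Rightarrow> 't \<Rightarrow> 't" where
  "rev_tok S T act t = (THE u. u \<in> T \<and> is_reverse S act t u)"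

definition consistent :: "'a set \<Rightarrow> 't set \<Rightarrow> ('t \<Rightarrow> 'a \<Rightarrow> 'a) \<Rightarrow> 't list \<Rightarrow> bool" where
  "consistent S T act w \<longleftrightarrow> \<not> (\<exists>t\<in>set w. rev_tok S T act t \<in> set w)"

definition vacuous :: "'a set \<Rightarrow> 't set \<Rightarrow> ('t \<Rightarrow> 'a \<Rightarrow> 'a) \<Rightarrow> 't list \<Rightarrow> bool" where
  "vacuous S T act w \<longleftrightarrow>
     (\<forall>t\<in>T. count_list w t = count_list w (rev_tok S T act t))"

definition effective :: "('t \<Rightarrow> 'a \<Rightarrow> 'a) \<Rightarrow> 't \<Rightarrow> 'a \<Rightarrow> bool" where
  "effective act t s \<longleftrightarrow> act t s \<noteq> s"

fun stepwise_effective :: "('t \<Rightarrow> 'a \<Rightarrow> 'a) \<Rightarrow> 't list \<Rightarrow> 'a \<Rightarrow> bool" where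
  "stepwise_effective act [] s = True"
| "stepwise_effective act (t # w) s \<longleftrightarrow> act t s \<noteq> s \<and> stepwise_effective act w (act t s)"

definition medium :: "'a set \<Rightarrow> 't set \<Rightarrow> ('t \<Rightarrow> 'a \<Rightarrow> 'a) \<Rightarrow> bool" where
  "medium S T act \<longleftrightarrow>
     finite S \<and>
     (\<forall>t\<in>T. \<forall>s\<in>S. act t s \<in> S) \<and>
     \<comment> \<open>(1) unique reverse\<close>
     (\<forall>t\<in>T. \<exists>!u. u \<in> T \<and> is_reverse S act t u) \<and>
     \<comment> \<open>(2) reachability by a consistent message\<close>
     (\<forall>P\<in>S. \<forall>Q\<in>S. P \<noteq> Q \<longrightarrow>
        (\<exists>w. set w \<subseteq> T \<and> consistent S T act w \<and> apply_msg act P w = Q)) \<and>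
     \<comment> \<open>(3) stepwise effective returns iff vacuous\<close>
     (\<forall>P\<in>S. \<forall>w. set w \<subseteq> T \<longrightarrow> stepwise_effective act w P \<longrightarrow>
        (apply_msg act P w = P \<longleftrightarrow> vacuous S T act w)) \<and>
     \<comment> \<open>(4)\<close>
     (\<forall>P\<in>S. \<forall>Q\<in>S. \<forall>w z. set w \<subseteq> T \<longrightarrow> set z \<subseteq> T \<longrightarrow>
        apply_msg act P w = apply_msg act Q z \<longrightarrow>
        stepwise_effective act w P \<longrightarrow> stepwise_effective act z Q \<longrightarrow>
        consistent S T act w \<longrightarrow> consistent S T act z \<longrightarrow>
        consistent S T act (w @ z))"

definition orientation :: "'a set \<Rightarrow> 't set \<Rightarrow> ('t \<Rightarrow> 'a \<Rightarrow> 'a) \<Rightarrow> 't set \<Rightarrow> bool" where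
  "orientation S T act Tp \<longleftrightarrow> Tp \<subseteq> T \<and>
     (\<forall>t\<in>T. (t \<in> Tp) \<noteq> (rev_tok S T act t \<in> Tp))"

definition closed_orientation :: "'a set \<Rightarrow> 't set \<Rightarrow> ('t \<Rightarrow> 'a \<Rightarrow> 'a) \<Rightarrow> 't set \<Rightarrow> bool" where
  "closed_orientation S T act Tp \<longleftrightarrow> orientation S T act Tp \<and>
     (\<forall>s\<in>S. \<forall>t\<in>Tp. \<forall>t'\<in>Tp. t \<noteq> t' \<longrightarrow> effective act t s \<longrightarrow> effective act t' s \<longrightarrow>
        stepwise_effective act [t, t'] s \<and> stepwise_effective act [t', t] s)"

end

theory Submission
  imports Defs
begin

lemma med_fin: "medium S T act \<Longrightarrow> finite S" by (simp add: medium_def)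
lemma med_cl: "medium S T act \<Longrightarrow> \<forall>t\<in>T. \<forall>s\<in>S. act t s \<in> S" by (simp add: medium_def)
lemma med_uniq: "medium S T act \<Longrightarrow> t \<in> T \<Longrightarrow> \<exists>!u. u \<in> T \<and> is_reverse S act t u"
proof -
  assume "medium S T act" "t \<in> T"
  then have "\<forall>t\<in>T. \<exists>!u. u \<in> T \<and> is_reverse S act t u" unfolding medium_def by (elim conjE)
  then show ?thesis using \<open>t \<in> T\<close> by (rule bspec)
qed
lemma med_vac: "medium S T act \<Longrightarrow> P \<in> S \<Longrightarrow> set w \<subseteq> T \<Longrightarrow> stepwise_effective act w P
   \<Longrightarrow> apply_msg act P w = P \<Longrightarrow> vacuous S T act w"
proof -
  assume a: "medium S T act" "P \<in> S" "set w \<subseteq> T" "stepwise_effective act w P" "apply_msg act P w = P"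
  then have "\<forall>P\<in>S. \<forall>w. set w \<subseteq> T \<longrightarrow> stepwise_effective act w P \<longrightarrow>
        (apply_msg act P w = P \<longleftrightarrow> vacuous S T act w)" unfolding medium_def by (elim conjE)
  then show ?thesis using a by blast
qed

lemma se_append:
  "stepwise_effective act (u @ v) p \<longleftrightarrow> stepwise_effective act u p \<and> stepwise_effective act v (fold act u p)"
  by (induction u arbitrary: p) auto

lemma apply_in:
  assumes "\<forall>t\<in>T. \<forall>s\<in>S. act t s \<in> S" "set w \<subseteq> T" "p \<in> S"
  shows "fold act w p \<in> S"
  using assms by (induction w arbitrary: p) auto

lemma rev_props:
  assumes "medium S T act" "t \<in> T"
  shows "rev_tok S T act t \<in> T \<and> is_reverse S act t (rev_tok S T act t)"
proof -
  have "\<exists>!u. u \<in> T \<and> is_reverse S act t u" using med_uniq[OF assms] .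
  then show ?thesis unfolding rev_tok_def by (rule theI')
qed

lemma rev_rev:
  assumes "medium S T act" "t \<in> T"
  shows "rev_tok S T act (rev_tok S T act t) = t"
proof -
  let ?u = "rev_tok S T act t"
  have u: "?u \<in> T" "is_reverse S act t ?u" using rev_props[OF assms] by auto
  have sym: "is_reverse S act ?u t" using u(2) unfolding is_reverse_def by metis
  have ex1: "\<exists>!v. v \<in> T \<and> is_reverse S act ?u v" using med_uniq[OF assms(1) u(1)] .
  have "(THE v. v \<in> T \<and> is_reverse S act ?u v) = t"
    using the1_equality[OF ex1] sym assms(2) by blast
  then show ?thesis unfolding rev_tok_def[of S T act ?u] .
qed

lemma back_path:
  assumes "medium S T act" "set w \<subseteq> T" "p \<in> S" "stepwise_effective act w p"
  shows "stepwise_effective act (map (rev_tok S T act) (rev w)) (fold act w p)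
    \<and> fold act (map (rev_tok S T act) (rev w)) (fold act w p) = p"
  using assms(2-4)
proof (induction w arbitrary: p)
  case Nil then show ?case by simp
next
  case (Cons t w)
  have cl: "\<forall>t\<in>T. \<forall>s\<in>S. act t s \<in> S" using med_cl[OF assms(1)] .
  have tT: "t \<in> T" using Cons by auto
  have p': "act t p \<in> S" using cl tT Cons by auto
  have ne: "act t p \<noteq> p" using Cons by auto
  have IH: "stepwise_effective act (map (rev_tok S T act) (rev w)) (fold act w (act t p))
    \<and> fold act (map (rev_tok S T act) (rev w)) (fold act w (act t p)) = act t p"
    using Cons p' by auto
  have r: "is_reverse S act t (rev_tok S T act t)" using rev_props[OF assms(1) tT] by auto
  have bk: "act (rev_tok S T act t) (act t p) = p"
    using r Cons(3) p' ne unfolding is_reverse_def by metis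
  show ?case using IH bk ne by (simp add: se_append)
qed

lemma fwd_path:
  assumes "closed_orientation S T act Tp" "\<forall>t\<in>T. \<forall>s\<in>S. act t s \<in> S"
    "distinct w" "set w \<subseteq> Tp" "p \<in> S" "\<forall>t\<in>set w. effective act t p"
  shows "stepwise_effective act w p"
  using assms(3-6)
proof (induction w arbitrary: p)
  case Nil then show ?case by simp
next
  case (Cons t w)
  have TpT: "Tp \<subseteq> T" using assms(1) unfolding closed_orientation_def orientation_def by blast
  have p': "act t p \<in> S" using assms(2) TpT Cons by auto
  have "\<forall>t''\<in>set w. effective act t'' (act t p)"
  proof
    fix t'' assume "t'' \<in> set w"
    then have "t'' \<noteq> t" "t'' \<in> Tp" "effective act t'' p" using Cons by auto
    then have "stepwise_effective act [t, t''] p"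
      using assms(1) Cons unfolding closed_orientation_def by auto
    then show "effective act t'' (act t p)" by (simp add: effective_def)
  qed
  then have "stepwise_effective act w (act t p)" using Cons p' by auto
  then show ?case using Cons by (simp add: effective_def)
qed

theorem mainTheorem6:
  fixes S :: "'a set" and T Tp :: "'t set" and act :: "'t \<Rightarrow> 'a \<Rightarrow> 'a" and s :: 'a
  assumes "medium S T act"
    and "closed_orientation S T act Tp"
    and "s \<in> S"
  shows "real (card {t \<in> Tp. effective act t s}) \<le> log 2 (real (card S))"
proof (cases "finite {t \<in> Tp. effective act t s}")
  case False
  have "card S \<ge> 1" using assms(3) med_fin[OF assms(1)]
    by (metis One_nat_def Suc_leI card_gt_0_iff empty_iff)
  then show ?thesis using False by simp
next
  case True
  define E where "E = {t \<in> Tp. effective act t s}"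
  have finS: "finite S" using med_fin[OF assms(1)] .
  have cl: "\<forall>t\<in>T. \<forall>s\<in>S. act t s \<in> S" using med_cl[OF assms(1)] .
  have TpT: "Tp \<subseteq> T" using assms(2) unfolding closed_orientation_def orientation_def by blast
  have orient: "\<forall>t\<in>T. (t \<in> Tp) \<noteq> (rev_tok S T act t \<in> Tp)"
    using assms(2) unfolding closed_orientation_def orientation_def by blast
  obtain xs where xs: "distinct xs" "set xs = E" using True E_def finite_distinct_list by blast
  define f where "f A = fold act (filter (\<lambda>x. x \<in> A) xs) s" for A
  have fwd: "stepwise_effective act (filter (\<lambda>x. x \<in> A) xs) s" for A
    by (rule fwd_path[OF assms(2) cl _ _ assms(3)]) (use xs E_def in auto)
  have key: False if eq: "f A = f B" and tA: "t \<in> A" and tB: "t \<notin> B" and tE: "t \<in> E" for A B t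
  proof -
    let ?wA = "filter (\<lambda>x. x \<in> A) xs"
    let ?wB = "filter (\<lambda>x. x \<in> B) xs"
    let ?rv = "rev_tok S T act"
    let ?w = "?wA @ map ?rv (rev ?wB)"
    have sA: "set ?wA \<subseteq> T" "set ?wB \<subseteq> T" using xs E_def TpT by auto
    have bp: "stepwise_effective act (map ?rv (rev ?wB)) (fold act ?wB s)
      \<and> fold act (map ?rv (rev ?wB)) (fold act ?wB s) = s"
      using back_path[OF assms(1) sA(2) assms(3) fwd] .
    have se: "stepwise_effective act ?w s" using bp eq fwd unfolding f_def by (simp add: se_append)
    have ret: "apply_msg act s ?w = s" using bp eq unfolding f_def apply_msg_def by simp
    have setw: "set ?w \<subseteq> T" using sA rev_props[OF assms(1)] by auto
    have vac: "vacuous S T act ?w"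
      using med_vac[OF assms(1) assms(3) setw se ret] .
    have tT: "t \<in> T" using tE E_def TpT by auto
    have tTp: "t \<in> Tp" using tE E_def by auto
    have rvt: "?rv t \<notin> Tp" using orient tT tTp by blast
    have c1: "count_list ?w t \<noteq> 0" using tA tE xs by (simp add: count_list_0_iff)
    have c2: "count_list ?w (?rv t) = 0"
    proof -
      have "?rv t \<notin> set ?wA" using rvt xs E_def by auto
      moreover have "?rv t \<notin> set (map ?rv (rev ?wB))"
      proof
        assume "?rv t \<in> set (map ?rv (rev ?wB))"
        then obtain b where b: "b \<in> set ?wB" "?rv t = ?rv b" by auto
        have "b \<in> T" using b sA by auto
        then have "t = b" using b rev_rev[OF assms(1)] tT by metis
        then show False using b tB by simp
      qed
      ultimately show ?thesis by (simp add: count_list_0_iff)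
    qed
    show False using vac tT c1 c2 unfolding vacuous_def by metis
  qed
  have inj: "inj_on f (Pow E)"
  proof (rule inj_onI)
    fix A B assume A: "A \<in> Pow E" and B: "B \<in> Pow E" and eq: "f A = f B"
    show "A = B"
    proof (rule ccontr)
      assume "A \<noteq> B"
      then have "\<not> A \<subseteq> B \<or> \<not> B \<subseteq> A" by auto
      then show False
      proof
        assume "\<not> A \<subseteq> B"
        then obtain t where t: "t \<in> A" "t \<notin> B" by auto
        have "t \<in> E" using t A by auto
        then show False using key[OF eq t] by simp
      next
        assume "\<not> B \<subseteq> A"
        then obtain t where t: "t \<in> B" "t \<notin> A" by auto
        have "t \<in> E" using t B by auto
        then show False using key[OF eq[symmetric] t] by simp
      qed
    qed
  qed
  have img: "f ` Pow E \<subseteq> S"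
  proof
    fix x assume "x \<in> f ` Pow E"
    then obtain A where "x = f A" by auto
    moreover have "set (filter (\<lambda>x. x \<in> A) xs) \<subseteq> T" using xs E_def TpT by auto
    ultimately show "x \<in> S" unfolding f_def using apply_in[OF cl _ assms(3)] by blast
  qed
  have "card (Pow E) \<le> card S" using card_inj_on_le[OF inj img finS] .
  then have le: "2 ^ card E \<le> card S" using True E_def by (simp add: card_Pow)
  then have "real (2 ^ card E) \<le> real (card S)" by linarith
  then have "log 2 (2 ^ card E) \<le> log 2 (real (card S))"
    by (subst log_le_cancel_iff) (auto intro: order.strict_trans2[OF _ le])
  then show ?thesis using E_def by (simp add: log_nat_power)
qed

end
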